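(* Let $q(z)$ be a monic real polynomial of degree $p$ with $q(1)=0$, let $r(z)$ be a polynomial of degree $p-1$, and let $\ell>0$. Then there exist a constant $C_0>0$, depending only on $q$, $r$ and $\ell$, and some $\mu_0\in(0,\ell)$, such that for every $\mu\in(0,\mu_0)$, $$\sup_{\nu\in[\mu,\ell]}\rho\big(q(z)-\nu\, r(z)\big)\ge 1-C_0\frac{\mu}{\ell}.$$
   Context: For a polynomial $s(z)$, $\rho(s)$ denotes the maximum modulus of a (complex) root of $s$. *)

theory Defs
  imports "HOL-Computational_Algebra.Computational_Algebra"
begin

definition root_radius :: "complex poly \<Rightarrow> real" where
  "root_radius s = Max {norm z | z. poly s z = 0}"

end

theory Submission
  imports Defs
begin


lemma gl_mset:
  fixes A :: "complex multiset" and z :: complex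
  assumes "\<forall>x\<in>#A. Re x < Re z"
  shows "poly (\<Prod>x\<in>#A. [:-x,1:]) z \<noteq> 0 \<and>
    Re (poly (pderiv (\<Prod>x\<in>#A. [:-x,1:])) z / poly (\<Prod>x\<in>#A. [:-x,1:]) z) \<ge> 0 \<and>
    (A \<noteq> {#} \<longrightarrow> Re (poly (pderiv (\<Prod>x\<in>#A. [:-x,1:])) z / poly (\<Prod>x\<in>#A. [:-x,1:]) z) > 0)"
  using assms
proof (induction A)
  case empty
  then show ?case by simp
next
  case (add w A)
  define P where "P = (\<Prod>x\<in>#A. [:-x,1:])"
  have IH: "poly P z \<noteq> 0" "Re (poly (pderiv P) z / poly P z) \<ge> 0"
    using add P_def by auto
  have wz: "Re (z - w) > 0" using add by auto
  hence nz: "z - w \<noteq> 0" by auto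
  have e1: "(\<Prod>x\<in>#add_mset w A. [:-x,1:]) = [:-w,1:] * P" by (simp add: P_def)
  have e2: "poly (pderiv ([:-w,1:] * P)) z = (z - w) * poly (pderiv P) z + poly P z"
  proof -
    have "pderiv ([:-w,1:] * P) = [:-w,1:] * pderiv P + P"
      unfolding pderiv_mult by (simp add: pderiv_pCons)
    then show ?thesis by (subst (asm) eq_commute, simp only:) (simp add: algebra_simps)
  qed
  have pz: "poly ([:-w,1:] * P) z = (z - w) * poly P z" by (simp add: algebra_simps)
  have ratio: "poly (pderiv ([:-w,1:] * P)) z / poly ([:-w,1:] * P) z
     = poly (pderiv P) z / poly P z + 1 / (z - w)"
    unfolding e2 pz using nz IH(1) by (simp add: field_simps)
  have "Re (1 / (z - w)) = Re (z - w) / ((Re (z - w))\<^sup>2 + (Im (z - w))\<^sup>2)"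
    by (simp add: Re_divide)
  moreover have "(Re (z - w))\<^sup>2 + (Im (z - w))\<^sup>2 > 0"
    using wz by (simp add: add_pos_nonneg)
  ultimately have "Re (1 / (z - w)) > 0" using wz by simp
  then have "Re (poly (pderiv ([:-w,1:] * P)) z / poly ([:-w,1:] * P) z) > 0"
    unfolding ratio using IH(2) by simp
  then show ?case unfolding e1 pz using nz IH(1) by simp
qed

lemma gl:
  fixes G :: "complex poly"
  assumes "degree G > 0" "\<forall>x. poly G x = 0 \<longrightarrow> Re x < a" "Re z \<ge> a"
  shows "poly (pderiv G) z \<noteq> 0"
proof -
  have G0: "G \<noteq> 0" using assms(1) by auto
  obtain A where A: "size A = degree G" "G = smult (lead_coeff G) (\<Prod>x\<in>#A. [:-x, 1:])"
    using alg_closed_imp_factorization[OF G0] by blast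
  have Ane: "A \<noteq> {#}" using A(1) assms(1) by auto
  have c0: "lead_coeff G \<noteq> 0" using G0 by simp
  have roots: "\<forall>x\<in>#A. Re x < Re z"
  proof
    fix x assume "x \<in># A"
    then have "poly (\<Prod>x\<in>#A. [:-x, 1:]) x = 0"
      by (auto simp: poly_prod_mset prod_mset_zero_iff)
    then have "poly G x = 0" by (subst A(2)) simp
    then show "Re x < Re z" using assms(2,3) by force
  qed
  from gl_mset[OF roots] Ane
  have "Re (poly (pderiv (\<Prod>x\<in>#A. [:-x,1:])) z / poly (\<Prod>x\<in>#A. [:-x,1:]) z) > 0" by blast
  then have "poly (pderiv (\<Prod>x\<in>#A. [:-x,1:])) z \<noteq> 0" by auto
  then show ?thesis using c0 by (subst A(2)) (simp add: pderiv_smult)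
qed

lemma gl_iter:
  fixes G :: "complex poly"
  assumes "j < degree G" "\<forall>x. poly G x = 0 \<longrightarrow> Re x < a"
  shows "\<forall>z. Re z \<ge> a \<longrightarrow> poly ((pderiv ^^ j) G) z \<noteq> 0"
  using assms
proof (induction j)
  case 0
  then show ?case by force
next
  case (Suc j)
  have deg: "degree ((pderiv ^^ j) G) = degree G - j" for j
    by (induction j) (auto simp: degree_pderiv)
  have d: "degree ((pderiv ^^ j) G) > 0" using deg[of j] Suc.prems by simp
  have r: "\<forall>x. poly ((pderiv ^^ j) G) x = 0 \<longrightarrow> Re x < a"
    using Suc by (meson Suc_lessD not_less)
  show ?case using gl[OF d r] by simp
qed

lemma order_pderiv_iter:
  fixes P :: "real poly"
  assumes "P \<noteq> 0" "j < order x P"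
  shows "(pderiv ^^ j) P \<noteq> 0 \<and> order x ((pderiv ^^ j) P) = order x P - j"
  using assms
proof (induction j)
  case 0
  then show ?case by simp
next
  case (Suc j)
  define Q where "Q = (pderiv ^^ j) P"
  have Q: "Q \<noteq> 0" "order x Q = order x P - j" using Suc Q_def by auto
  have "order x Q \<ge> 2" using Q Suc.prems by linarith
  then have "poly Q x = 0" using order_root Q by (metis not_numeral_le_zero)
  have "degree Q \<ge> 2" using order_degree[OF Q(1), of x] \<open>order x Q \<ge> 2\<close> by linarith
  then have "pderiv Q \<noteq> 0" by (simp add: pderiv_eq_0_iff)
  moreover have "order x Q = Suc (order x (pderiv Q))"
    using order_pderiv[OF Q(1) \<open>poly Q x = 0\<close>] .
  ultimately show ?case using Q by (simp add: Q_def)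
qed

lemma pderiv_iter_diff:
  fixes q r :: "real poly"
  shows "(pderiv ^^ j) (q - smult c r) = (pderiv ^^ j) q - smult c ((pderiv ^^ j) r)"
  by (induction j) (auto simp: pderiv_diff pderiv_smult)

lemma pderiv_map_of_real:
  "pderiv (map_poly complex_of_real p) = map_poly complex_of_real (pderiv p)"
  by (rule poly_eqI) (simp add: coeff_map_poly coeff_pderiv)

lemma pderiv_iter_map_of_real:
  "(pderiv ^^ j) (map_poly complex_of_real p) = map_poly complex_of_real ((pderiv ^^ j) p)"
  by (induction j) (auto simp: pderiv_map_of_real)

lemma poly_map_of_real:
  "poly (map_poly complex_of_real p) (complex_of_real x) = complex_of_real (poly p x)"
  by (induction p) (auto simp: map_poly_pCons)




lemma root_bound:
  fixes P :: "complex poly"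
  assumes "lead_coeff P = 1" "poly P z = 0"
  shows "norm z \<le> 1 + (\<Sum>i<degree P. norm (coeff P i))"
proof (cases "norm z \<le> 1")
  case True
  moreover have "0 \<le> (\<Sum>i<degree P. norm (coeff P i))" by (intro sum_nonneg) auto
  ultimately show ?thesis by linarith
next
  case False
  define n where "n = degree P"
  define A where "A = (\<Sum>i<n. norm (coeff P i))"
  have "n > 0"
  proof (rule ccontr)
    assume "\<not> n > 0"
    then have "degree P = 0" by (simp add: n_def)
    then obtain c where "P = [:c:]" by (rule degree_eq_zeroE)
    then show False using assms by simp
  qed
  have "0 = (\<Sum>i\<le>n. coeff P i * z ^ i)" using assms(2) by (simp add: poly_altdef n_def)
  also have "\<dots> = (\<Sum>i<n. coeff P i * z ^ i) + z ^ n"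
    using assms(1) by (simp add: lessThan_Suc_atMost[symmetric] n_def)
  finally have zn: "z ^ n = - (\<Sum>i<n. coeff P i * z ^ i)" by (simp add: eq_neg_iff_add_eq_0 add.commute)
  have "norm z ^ n = norm (\<Sum>i<n. coeff P i * z ^ i)" by (metis zn norm_power norm_minus_cancel)
  also have "\<dots> \<le> (\<Sum>i<n. norm (coeff P i) * norm z ^ i)"
    by (rule order.trans[OF norm_sum]) (simp add: norm_mult norm_power)
  also have "\<dots> \<le> (\<Sum>i<n. norm (coeff P i) * norm z ^ (n - 1))"
    using False by (intro sum_mono mult_left_mono power_increasing) auto
  also have "\<dots> = A * norm z ^ (n - 1)" by (simp add: A_def sum_distrib_right)
  finally have "norm z * norm z ^ (n - 1) \<le> A * norm z ^ (n - 1)"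
    using \<open>n > 0\<close> by (simp add: power_eq_if)
  moreover have "norm z ^ (n - 1) > 0" using False by (intro zero_less_power) linarith
  ultimately have "norm z \<le> A" by (simp add: mult_le_cancel_right)
  then show ?thesis by (simp add: A_def n_def)
qed

lemma root_radius_ge:
  assumes "s \<noteq> 0" "poly s z = 0"
  shows "norm z \<le> root_radius s"
proof -
  have "finite {z. poly s z = 0}" using poly_roots_finite[OF assms(1)] .
  then have "finite ((\<lambda>z. norm z) ` {z. poly s z = 0})" by (rule finite_imageI)
  moreover have "{norm z | z. poly s z = 0} = (\<lambda>z. norm z) ` {z. poly s z = 0}" by auto
  ultimately show ?thesis unfolding root_radius_def using assms(2) by (intro Max_ge) auto
qed

lemma root_radius_le:
  fixes s :: "complex poly"
  assumes "degree s > 0" "\<And>z. poly s z = 0 \<Longrightarrow> norm z \<le> B"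
  shows "root_radius s \<le> B"
proof -
  have s0: "s \<noteq> 0" using assms(1) by auto
  have "finite {z. poly s z = 0}" using poly_roots_finite[OF s0] .
  then have "finite ((\<lambda>z. norm z) ` {z. poly s z = 0})" by (rule finite_imageI)
  moreover have eq: "{norm z | z. poly s z = 0} = (\<lambda>z. norm z) ` {z. poly s z = 0}" by auto
  ultimately have fin: "finite {norm z | z. poly s z = 0}" by simp
  obtain z where "poly s z = 0" using alg_closed_imp_poly_has_root[OF assms(1)] by blast
  then have "{norm z | z. poly s z = 0} \<noteq> {}" by auto
  then show ?thesis unfolding root_radius_def using fin assms(2) by (subst Max_le_iff) auto
qed



theorem proposition8:
  fixes q r :: "real poly" and p :: nat and l :: real
  assumes "lead_coeff q = 1" and "degree q = p" and "poly q 1 = 0"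
    and "degree r = p - 1" and "r \<noteq> 0" and "l > 0"
  shows "\<exists>C0 > 0. \<exists>\<mu>0. 0 < \<mu>0 \<and> \<mu>0 < l \<and>
           (\<forall>\<mu>. 0 < \<mu> \<and> \<mu> < \<mu>0 \<longrightarrow>
              (SUP \<nu>\<in>{\<mu>..l}. root_radius (map_poly complex_of_real (q - smult \<nu> r)))
                \<ge> 1 - C0 * \<mu> / l)"
proof -
  have q0: "q \<noteq> 0" using assms(1) by auto
  have p0: "p > 0"
  proof (rule ccontr)
    assume "\<not> p > 0"
    then have "degree q = 0" using assms(2) by simp
    then obtain c where "q = [:c:]" by (rule degree_eq_zeroE)
    then show False using assms(1,3) by simp
  qed
  define G where "G = (\<lambda>\<nu>. map_poly complex_of_real (q - smult \<nu> r))"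
  have coeffg: "coeff (q - smult \<nu> r) p = 1" for \<nu>
  proof -
    have "coeff r p = 0" using assms(4) p0 by (intro coeff_eq_0) simp
    then show ?thesis using assms(1,2) by simp
  qed
  have degg: "degree (q - smult \<nu> r) = p" for \<nu>
  proof (rule antisym)
    have "degree (smult \<nu> r) \<le> p" using degree_smult_le[of \<nu> r] assms(4) by simp
    then show "degree (q - smult \<nu> r) \<le> p" using degree_diff_le assms(2) by blast
    show "p \<le> degree (q - smult \<nu> r)" using coeffg[of \<nu>] by (intro le_degree) simp
  qed
  have coeffG: "coeff (G \<nu>) i = complex_of_real (coeff q i - \<nu> * coeff r i)" for \<nu> i
    by (simp add: G_def coeff_map_poly)
  have degG: "degree (G \<nu>) = p" for \<nu>
    unfolding G_def by (subst degree_map_poly) (auto simp: degg)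
  have leadG: "lead_coeff (G \<nu>) = 1" for \<nu>
  proof -
    have "lead_coeff (G \<nu>) = coeff (G \<nu>) p" by (simp add: degG)
    also have "\<dots> = complex_of_real (coeff (q - smult \<nu> r) p)" by (simp only: G_def coeff_map_poly of_real_0)
    finally show ?thesis using coeffg[of \<nu>] by (simp del: of_real_diff of_real_mult coeff_diff coeff_smult)
  qed
  have G0: "G \<nu> \<noteq> 0" for \<nu> using leadG[of \<nu>] by auto
  define B where "B = 1 + (\<Sum>i<p. \<bar>coeff q i\<bar> + l * \<bar>coeff r i\<bar>)"
  have bdd: "bdd_above ((\<lambda>\<nu>. root_radius (G \<nu>)) ` {\<mu>..l})" if "\<mu> > 0" for \<mu>
  proof (rule bdd_aboveI2)
    fix \<nu> assume \<nu>: "\<nu> \<in> {\<mu>..l}"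
    show "root_radius (G \<nu>) \<le> B"
    proof (rule root_radius_le)
      show "degree (G \<nu>) > 0" using degG p0 by simp
      fix z assume "poly (G \<nu>) z = 0"
      then have "norm z \<le> 1 + (\<Sum>i<degree (G \<nu>). norm (coeff (G \<nu>) i))"
        using root_bound leadG by blast
      also have "\<dots> = 1 + (\<Sum>i<p. \<bar>coeff q i - \<nu> * coeff r i\<bar>)"
        by (simp only: degG coeffG norm_of_real)
      also have "\<dots> \<le> B" unfolding B_def
      proof (intro add_left_mono sum_mono)
        fix i
        have "\<bar>\<nu> * coeff r i\<bar> \<le> l * \<bar>coeff r i\<bar>"
          using \<nu> that by (simp add: abs_mult mult_right_mono)
        then show "\<bar>coeff q i - \<nu> * coeff r i\<bar> \<le> \<bar>coeff q i\<bar> + l * \<bar>coeff r i\<bar>" by linarith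
      qed
      finally show "norm z \<le> B" .
    qed
  qed
  define k where "k = order 1 q"
  have k1: "k \<ge> 1" using order_root[of q 1] assms(3) q0 k_def by auto
  have kp: "k \<le> p" using order_degree[OF q0] assms(2) k_def by simp
  define h where "h = (pderiv ^^ (k - 1)) q"
  have hh: "h \<noteq> 0 \<and> order 1 h = 1"
    using order_pderiv_iter[OF q0, of "k - 1" 1] k1 k_def h_def by simp
  from order_decomp[OF conjunct1[OF hh], of 1] obtain h1 where
    h1': "h = [:-1,1:] ^ order 1 h * h1" "\<not> [:-1,1:] dvd h1" by (elim exE conjE)
  have h1: "h = [:-1,1:] * h1" "\<not> [:-1,1:] dvd h1" using h1' hh by simp_all
  define D where "D = poly h1 1"
  have D0: "D \<noteq> 0" using h1(2) poly_eq_0_iff_dvd[of h1 1] D_def by simp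
  have polyh: "poly h x = (x - 1) * poly h1 x" for x unfolding h1(1) by (simp add: algebra_simps)
  define s where "s = (pderiv ^^ (k - 1)) r"
  obtain S where S: "S > 0" "\<forall>x::real. norm x \<le> 2 \<longrightarrow> norm (poly s x) \<le> S"
    using poly_bound_exists[of 2 s] by blast
  have "isCont (poly h1) 1" by simp
  then have "poly h1 \<midarrow>1\<rightarrow> D" unfolding isCont_def D_def .
  then obtain \<eta> where \<eta>: "\<eta> > 0" "\<forall>x. x \<noteq> 1 \<and> norm (x - 1) < \<eta> \<longrightarrow> norm (poly h1 x - D) < \<bar>D\<bar> / 2"
    using LIM_D[of "poly h1" D 1 "\<bar>D\<bar>/2"] D0 by auto
  define C where "C = 4 * S / \<bar>D\<bar> + 1"
  have "4 * S / \<bar>D\<bar> \<ge> 0" using S(1) by simp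
  then have Cpos: "C > 0" unfolding C_def by linarith
  define e where "e = min \<eta> (1/2)"
  have e: "e > 0" "e \<le> \<eta>" "e \<le> 1/2" using \<eta> by (auto simp: e_def)
  define \<mu>0 where "\<mu>0 = min (l/2) (e / (2 * C))"
  have mu0: "\<mu>0 > 0" "\<mu>0 < l" using assms(6) e Cpos by (auto simp: \<mu>0_def)
  show ?thesis
  proof (rule exI[of _ "C * l"], intro conjI exI[of _ \<mu>0] mu0 allI impI)
    show "C * l > 0" using Cpos assms(6) by simp
    fix \<mu> :: real assume \<mu>: "0 < \<mu> \<and> \<mu> < \<mu>0"
    define \<delta> where "\<delta> = C * \<mu>"
    have \<delta>pos: "\<delta> > 0" using Cpos \<mu> by (simp add: \<delta>_def)
    have "\<mu> < e / (2 * C)" using \<mu> by (simp add: \<mu>0_def)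
    then have "C * \<mu> < e / 2" using Cpos by (simp add: field_simps)
    then have \<delta>e: "\<delta> < e / 2" by (simp add: \<delta>_def)
    have key: "\<delta> * \<bar>D\<bar> = \<mu> * (4 * S + \<bar>D\<bar>)"
      using D0 by (simp add: \<delta>_def C_def field_simps)
    define f where "f = (\<lambda>x. poly h x - \<mu> * poly s x)"
    have near: "\<bar>poly h1 x - D\<bar> < \<bar>D\<bar> / 2" "\<bar>\<mu> * poly s x\<bar> \<le> \<mu> * S"
      if "x = 1 - \<delta> \<or> x = 1 + \<delta>" for x
    proof -
      have "x \<noteq> 1" "norm (x - 1) < \<eta>" using that \<delta>pos \<delta>e e by auto
      then show "\<bar>poly h1 x - D\<bar> < \<bar>D\<bar> / 2" using \<eta>(2) by auto
      have "norm x \<le> 2" using that \<delta>pos \<delta>e e by auto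
      then have "\<bar>poly s x\<bar> \<le> S" using S(2) by auto
      then show "\<bar>\<mu> * poly s x\<bar> \<le> \<mu> * S" using \<mu> by (simp add: abs_mult mult_left_mono)
    qed
    have cont: "\<forall>x. 1 - \<delta> \<le> x \<and> x \<le> 1 + \<delta> \<longrightarrow> isCont f x" by (simp add: f_def)
    have le: "1 - \<delta> \<le> 1 + \<delta>" using \<delta>pos by simp
    have fp: "f (1 + \<delta>) = \<delta> * poly h1 (1 + \<delta>) - \<mu> * poly s (1 + \<delta>)"
      by (simp add: f_def polyh)
    have fm: "f (1 - \<delta>) = - (\<delta> * poly h1 (1 - \<delta>)) - \<mu> * poly s (1 - \<delta>)"
      by (simp add: f_def polyh)
    have key2: "\<delta> * \<bar>D\<bar> = 4 * (\<mu> * S) + \<mu> * \<bar>D\<bar>" using key by (simp add: algebra_simps)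
    have muD: "\<mu> * \<bar>D\<bar> > 0" using \<mu> D0 by simp
    have muS: "\<mu> * S > 0" using \<mu> S by simp
    have np: "\<bar>\<mu> * poly s (1 + \<delta>)\<bar> \<le> \<mu> * S" and nm: "\<bar>\<mu> * poly s (1 - \<delta>)\<bar> \<le> \<mu> * S"
      using near(2) by auto
    obtain xs where xs: "1 - \<delta> \<le> xs" "xs \<le> 1 + \<delta>" "f xs = 0"
    proof (cases "D > 0")
      case True
      have a1: "poly h1 (1 + \<delta>) \<ge> D / 2" "poly h1 (1 - \<delta>) \<ge> D / 2"
        using near(1)[of "1 + \<delta>"] near(1)[of "1 - \<delta>"] abs_of_pos[OF True] unfolding abs_less_iff by linarith+
      have b1: "\<delta> * poly h1 (1 + \<delta>) \<ge> \<delta> * (D / 2)" "\<delta> * poly h1 (1 - \<delta>) \<ge> \<delta> * (D / 2)"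
        using a1 \<delta>pos by (auto intro: mult_left_mono)
      have c1: "\<delta> * (D / 2) = (\<delta> * \<bar>D\<bar>) / 2" using True by simp
      have "f (1 + \<delta>) \<ge> 0" using fp b1(1) c1 key2 muD muS np by linarith
      moreover have "f (1 - \<delta>) \<le> 0" using fm b1(2) c1 key2 muD muS nm by linarith
      ultimately show ?thesis using IVT[of f "1 - \<delta>" 0 "1 + \<delta>", OF _ _ le cont] that by auto
    next
      case False
      then have Dn: "D < 0" using D0 by simp
      have a1: "poly h1 (1 + \<delta>) \<le> D / 2" "poly h1 (1 - \<delta>) \<le> D / 2"
        using near(1)[of "1 + \<delta>"] near(1)[of "1 - \<delta>"] abs_of_neg[OF Dn] unfolding abs_less_iff by linarith+
      have b1: "\<delta> * poly h1 (1 + \<delta>) \<le> \<delta> * (D / 2)" "\<delta> * poly h1 (1 - \<delta>) \<le> \<delta> * (D / 2)"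
        using a1 \<delta>pos by (auto intro: mult_left_mono)
      have c1: "\<delta> * (D / 2) = - (\<delta> * \<bar>D\<bar>) / 2" using Dn by simp
      have "f (1 + \<delta>) \<le> 0" using fp b1(1) c1 key2 muD muS np by linarith
      moreover have "f (1 - \<delta>) \<ge> 0" using fm b1(2) c1 key2 muD muS nm by linarith
      ultimately show ?thesis using IVT2[of f "1 + \<delta>" 0 "1 - \<delta>", OF _ _ le cont] that by auto
    qed
    have "poly ((pderiv ^^ (k - 1)) (q - smult \<mu> r)) xs = 0"
      using xs(3) by (simp add: pderiv_iter_diff f_def h_def s_def)
    then have root: "poly ((pderiv ^^ (k - 1)) (G \<mu>)) (complex_of_real xs) = 0"
      by (simp add: G_def pderiv_iter_map_of_real poly_map_of_real)
    have "\<exists>z. poly (G \<mu>) z = 0 \<and> Re z \<ge> xs"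
    proof (rule ccontr)
      assume "\<not> ?thesis"
      then have "\<forall>z. poly (G \<mu>) z = 0 \<longrightarrow> Re z < xs" by force
      from gl_iter[OF _ this, of "k - 1"] have
        "poly ((pderiv ^^ (k - 1)) (G \<mu>)) (complex_of_real xs) \<noteq> 0"
        using degG kp k1 by simp
      then show False using root by simp
    qed
    then obtain z where z: "poly (G \<mu>) z = 0" "Re z \<ge> xs" by blast
    have "1 - C * l * \<mu> / l = 1 - \<delta>" using assms(6) by (simp add: \<delta>_def)
    also have "\<dots> \<le> norm z" using z(2) xs(1) abs_Re_le_cmod[of z] by linarith
    also have "\<dots> \<le> root_radius (G \<mu>)" using root_radius_ge[OF G0 z(1)] .
    also have "\<dots> \<le> (SUP \<nu>\<in>{\<mu>..l}. root_radius (G \<nu>))"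
      using \<mu> mu0 by (intro cSUP_upper bdd) auto
    finally show "1 - C * l * \<mu> / l \<le> (SUP \<nu>\<in>{\<mu>..l}. root_radius (map_poly complex_of_real (q - smult \<nu> r)))"
      by (simp add: G_def)
  qed
qed

end
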